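(* Fix $a>0$. For $\beta>0$ let $\overline{q}_0$ be the solution of $\mathrm{d}\overline{q}_0(t)=\mathrm{d}W(t)+\frac14\big(a-e^{\overline{q}_0(t)/\beta}\big)\mathrm{d}t$, $\overline{q}_0(0)=0$, where $W$ is a standard Brownian motion, and let $l_2:=\beta^{1/6}$. Then for any $\gamma<0$, $$\mathbb{P}\Big(\inf\{t\geq0:\overline{q}_0(t)=l_2\}<\inf\{t\geq0:\overline{q}_0(t)=\gamma\}\Big)\longrightarrow 0\quad\text{as }\beta\to0.$$ *)

theory Defs
  imports "HOL-Probability.Probability"
begin

definition brownian_motion :: "'a measure \<Rightarrow> (real \<Rightarrow> 'a \<Rightarrow> real) \<Rightarrow> bool" where
  "brownian_motion M W \<longleftrightarrow>
     prob_space M \<and>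
     (\<forall>t\<ge>0. W t \<in> borel_measurable M) \<and>
     (\<forall>\<omega>\<in>space M. W 0 \<omega> = 0 \<and> continuous_on {0..} (\<lambda>t. W t \<omega>)) \<and>
     (\<forall>s t. 0 \<le> s \<and> s < t \<longrightarrow>
        distributed M lborel (\<lambda>\<omega>. W t \<omega> - W s \<omega>)
          (\<lambda>x. ennreal (normal_density 0 (sqrt (t - s)) x))) \<and>
     (\<forall>(n::nat) (ts::nat \<Rightarrow> real). 0 \<le> ts 0 \<and> (\<forall>i<n. ts i < ts (Suc i)) \<longrightarrow>
        prob_space.indep_vars M (\<lambda>_. borel) (\<lambda>i \<omega>. W (ts (Suc i)) \<omega> - W (ts i) \<omega>) {..<n})"

text \<open>First hitting time of level c by a path f on [0, infinity); infimum of the empty set is infinity.\<close>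
definition hit_time :: "(real \<Rightarrow> real) \<Rightarrow> real \<Rightarrow> ereal" where
  "hit_time f c = Inf {ereal t | t. 0 \<le> t \<and> f t = c}"

end

theory Submission
  imports Defs "HOL-Real_Asymp.Real_Asymp"
begin


definition dd :: "nat \<Rightarrow> real \<Rightarrow> real" where
  "dd j x = real_of_int \<lfloor>x * 2^j\<rfloor> / 2^j"

lemma dd_bounds:
  assumes "0 \<le> x" shows "0 \<le> dd j x" "dd j x \<le> x" "x - dd j x < 1 / 2^j"
proof -
  have p: "(0::real) < 2^j" by simp
  show "0 \<le> dd j x" unfolding dd_def using assms by simp
  have "real_of_int \<lfloor>x * 2^j\<rfloor> \<le> x * 2^j" by (rule of_int_floor_le)
  then show "dd j x \<le> x" unfolding dd_def using p by (simp add: divide_le_eq)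
  have "x * 2^j < real_of_int \<lfloor>x * 2^j\<rfloor> + 1" by (rule real_of_int_floor_add_one_gt)
  then have "x * 2^j - real_of_int \<lfloor>x * 2^j\<rfloor> < 1" by linarith
  then have "(x * 2^j - real_of_int \<lfloor>x * 2^j\<rfloor>) / 2^j < 1/2^j" using p
    by (intro divide_strict_right_mono) auto
  moreover have "x - real_of_int \<lfloor>x * 2^j\<rfloor> / 2^j = (x * 2^j - real_of_int \<lfloor>x * 2^j\<rfloor>) / 2^j"
    using p by (simp add: field_simps)
  ultimately have "x - real_of_int \<lfloor>x * 2^j\<rfloor> / 2^j < 1/2^j" by simp
  then show "x - dd j x < 1 / 2^j" unfolding dd_def .
qed

lemma floor_double: "\<lfloor>2 * (y::real)\<rfloor> = 2 * \<lfloor>y\<rfloor> \<or> \<lfloor>2 * y\<rfloor> = 2 * \<lfloor>y\<rfloor> + 1"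
proof -
  have a: "real_of_int \<lfloor>y\<rfloor> \<le> y" "y < real_of_int \<lfloor>y\<rfloor> + 1" by linarith+
  show ?thesis
  proof (cases "2 * y < 2 * real_of_int \<lfloor>y\<rfloor> + 1")
    case True
    have "\<lfloor>2 * y\<rfloor> = 2 * \<lfloor>y\<rfloor>" by (rule floor_unique) (use a True in linarith)+
    then show ?thesis by simp
  next
    case False
    have "\<lfloor>2 * y\<rfloor> = 2 * \<lfloor>y\<rfloor> + 1" by (rule floor_unique) (use a False in linarith)+
    then show ?thesis by simp
  qed
qed

context
  fixes f :: "real \<Rightarrow> real" and N :: nat and M :: real
  assumes cont: "continuous_on {0..} f"
  and inc: "\<And>j k. k < N * 2^j \<Longrightarrow> \<bar>f (real (Suc k) / 2^j) - f (real k / 2^j)\<bar> \<le> M * (9/10)^j"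
  and Mpos: "0 \<le> M"
begin

lemma dd_step:
  fixes x :: real
  assumes "0 \<le> x" "x \<le> N"
  shows "\<bar>f (dd (Suc j) x) - f (dd j x)\<bar> \<le> M * (9/10)^(Suc j)"
proof -
  define y where "y = x * 2^j"
  have y0: "0 \<le> y" using assms by (simp add: y_def)
  have e2: "x * 2^(Suc j) = 2 * y" by (simp add: y_def)
  define m where "m = nat \<lfloor>y\<rfloor>"
  have mm: "\<lfloor>y\<rfloor> = int m" using y0 by (simp add: m_def)
  from floor_double[of y] show ?thesis
  proof
    assume h: "\<lfloor>2 * y\<rfloor> = 2 * \<lfloor>y\<rfloor>"
    have "dd (Suc j) x = real_of_int \<lfloor>2*y\<rfloor> / 2^(Suc j)" unfolding dd_def e2 ..
    also have "\<dots> = real_of_int \<lfloor>y\<rfloor> / 2^j" unfolding h by simp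
    also have "\<dots> = dd j x" unfolding dd_def y_def ..
    finally have "dd (Suc j) x = dd j x" .
    then show ?thesis using Mpos by (simp add: dd_def)
  next
    assume h: "\<lfloor>2 * y\<rfloor> = 2 * \<lfloor>y\<rfloor> + 1"
    have d1: "dd (Suc j) x = real (Suc (2*m)) / 2^(Suc j)" unfolding dd_def e2 h mm by simp
    have d0: "dd j x = real (2*m) / 2^(Suc j)" unfolding dd_def y_def[symmetric] mm by simp
    have "real (Suc (2*m)) \<le> 2 * y" 
    proof -
      have "real_of_int \<lfloor>2*y\<rfloor> \<le> 2*y" by (rule of_int_floor_le)
      then show ?thesis using h mm by simp
    qed
    also have "2 * y \<le> real N * 2^(Suc j)" using assms by (simp add: y_def)
    finally have "real (Suc (2*m)) \<le> real (N * 2^(Suc j))" by simp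
    then have "2*m < N * 2^(Suc j)" by linarith
    from inc[OF this] show ?thesis unfolding d1 d0 .
  qed
qed

lemma dd_tele:
  fixes x :: real
  assumes "0 \<le> x" "x \<le> N"
  shows "\<bar>f (dd (n+m) x) - f (dd n x)\<bar> \<le> 10 * M * (9/10)^(Suc n) * (1 - (9/10)^m)"
proof (induction m)
  case 0
  then show ?case by simp
next
  case (Suc m)
  have "\<bar>f (dd (n + Suc m) x) - f (dd n x)\<bar> \<le> \<bar>f (dd (Suc (n+m)) x) - f (dd (n+m) x)\<bar> + \<bar>f (dd (n+m) x) - f (dd n x)\<bar>"
    by simp
  also have "\<dots> \<le> M * (9/10)^(Suc (n+m)) + 10 * M * (9/10)^(Suc n) * (1 - (9/10)^m)"
    using dd_step[OF assms, of "n+m"] Suc.IH by linarith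
  also have "\<dots> = 10 * M * (9/10)^(Suc n) * (1 - (9/10)^(Suc m))"
    by (simp add: power_add field_simps)
  finally show ?case .
qed

lemma dd_lim:
  fixes x :: real
  assumes "0 \<le> x" "x \<le> N"
  shows "\<bar>f x - f (dd n x)\<bar> \<le> 9 * M * (9/10)^n"
proof -
  have lo: "x - 1/2^m \<le> dd (n+m) x" for m
  proof -
    have "x - dd (n+m) x < 1/2^(n+m)" using dd_bounds(3)[OF assms(1)] .
    moreover have "(1::real)/2^(n+m) \<le> 1/2^m" by (simp add: power_add field_simps)
    ultimately show ?thesis by linarith
  qed
  have hi: "dd (n+m) x \<le> x" for m using dd_bounds(2)[OF assms(1)] .
  have "(\<lambda>m. x - 1/2^m) \<longlonglongrightarrow> x - 0"
    by (intro tendsto_diff tendsto_const) (simp add: LIMSEQ_inverse_realpow_zero divide_inverse)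
  then have "(\<lambda>m. x - 1/2^m) \<longlonglongrightarrow> x" by simp
  then have ddl: "(\<lambda>m. dd (n+m) x) \<longlonglongrightarrow> x"
    by (rule tendsto_sandwich[rotated 2]) (auto intro!: always_eventually lo hi)
  have "((\<lambda>m. f (dd (n+m) x)) \<longlonglongrightarrow> f x)"
    using continuous_on_tendsto_compose[OF cont ddl] assms dd_bounds(1)[OF assms(1)]
    by (simp add: o_def)
  then have "(\<lambda>m. \<bar>f (dd (n+m) x) - f (dd n x)\<bar>) \<longlonglongrightarrow> \<bar>f x - f (dd n x)\<bar>"
    by (intro tendsto_intros)
  moreover have "\<forall>m\<ge>0. \<bar>f (dd (n+m) x) - f (dd n x)\<bar> \<le> 9 * M * (9/10)^n"
  proof (intro allI impI)
    fix m :: nat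
    have "\<bar>f (dd (n+m) x) - f (dd n x)\<bar> \<le> 10 * M * (9/10)^(Suc n) * (1 - (9/10)^m)"
      by (rule dd_tele[OF assms])
    also have "\<dots> \<le> 10 * M * (9/10)^(Suc n)"
      using Mpos by (intro mult_left_le) auto
    also have "\<dots> = 9 * M * (9/10)^n" by simp
    finally show "\<bar>f (dd (n+m) x) - f (dd n x)\<bar> \<le> 9 * M * (9/10)^n" .
  qed
  ultimately show ?thesis by (intro LIMSEQ_le_const2) auto
qed

lemma chain_bound:
  fixes s t :: real
  assumes "0 \<le> s" "s \<le> t" "t \<le> N" "t - s \<le> 1/2^n"
  shows "\<bar>f t - f s\<bar> \<le> 19 * M * (9/10)^n"
proof -
  have p: "(0::real) < 2^n" by simp
  define a where "a = \<lfloor>s * 2^n\<rfloor>"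
  define b where "b = \<lfloor>t * 2^n\<rfloor>"
  have ab: "a \<le> b" unfolding a_def b_def using assms p by (intro floor_mono) simp
  have "t * 2^n - s * 2^n \<le> 1" using assms(4) p by (simp add: field_simps)
  then have ba: "b \<le> a + 1" unfolding a_def b_def by linarith
  have a0: "0 \<le> a" unfolding a_def using assms by simp
  have mid: "\<bar>f (dd n t) - f (dd n s)\<bar> \<le> M * (9/10)^n"
  proof (cases "b = a")
    case True
    then have "dd n t = dd n s" unfolding dd_def a_def b_def by simp
    then show ?thesis using Mpos by simp
  next
    case False
    then have b1: "b = a + 1" using ab ba by simp
    define k where "k = nat a"
    have ak: "a = int k" using a0 by (simp add: k_def)
    have "real_of_int b \<le> t * 2^n" unfolding b_def by (rule of_int_floor_le)
    also have "\<dots> \<le> real N * 2^n" using assms p by simp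
    finally have "real (Suc k) \<le> real (N * 2^n)" using b1 ak by simp
    then have kk: "k < N * 2^n" by linarith
    have "dd n t = real (Suc k) / 2^n" unfolding dd_def b_def[symmetric] b1 ak by simp
    moreover have "dd n s = real k / 2^n" unfolding dd_def a_def[symmetric] ak by simp
    ultimately show ?thesis using inc[OF kk] by simp
  qed
  have t0: "0 \<le> t" using assms by simp
  have "\<bar>f t - f s\<bar> \<le> \<bar>f t - f (dd n t)\<bar> + \<bar>f (dd n t) - f (dd n s)\<bar> + \<bar>f s - f (dd n s)\<bar>"
    by linarith
  also have "\<dots> \<le> 9 * M * (9/10)^n + M * (9/10)^n + 9 * M * (9/10)^n"
    using dd_lim[OF t0 assms(3)] mid dd_lim[OF assms(1)] assms by (intro add_mono) auto
  finally show ?thesis by simp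
qed

end


lemma normal_tail4:
  fixes X :: "'a \<Rightarrow> real"
  assumes P: "prob_space M" and D: "distributed M lborel X (\<lambda>x. ennreal (normal_density 0 \<sigma> x))"
    and s: "\<sigma> > 0" and x: "x > 0"
  shows "measure M {\<omega>\<in>space M. x < \<bar>X \<omega>\<bar>} \<le> 3 * \<sigma>^4 / x^4"
proof -
  interpret prob_space M by (rule P)
  have Xm[measurable]: "X \<in> borel_measurable M" using distributed_measurable[OF D] by simp
  have mom: "has_bochner_integral lborel (\<lambda>y. normal_density 0 \<sigma> y * y ^ 4) (3 * \<sigma>^4)"
  proof -
    have "3*\<sigma>^4 = \<sigma> * (\<sigma> * (\<sigma> * (\<sigma> * 3)))" by (simp add: eval_nat_numeral)
    then show ?thesis
      using normal_moment_even[OF s, of 0 2] by (simp add: fact_numeral power2_eq_square field_simps)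
  qed
  have int1: "integrable lborel (\<lambda>y. normal_density 0 \<sigma> y * y ^ 4)" using mom by (simp add: integrable.intros)
  have intM: "integrable M (\<lambda>\<omega>. X \<omega> ^ 4)"
    using distributed_integrable[OF D, of "\<lambda>y. y^4"] int1 by simp
  have E: "(\<integral>\<omega>. X \<omega> ^ 4 \<partial>M) = 3 * \<sigma>^4"
    using distributed_integral[OF D, of "\<lambda>y. y^4"] has_bochner_integral_integral_eq[OF mom] by simp
  have "measure M {\<omega>\<in>space M. x^4 \<le> X \<omega> ^ 4} \<le> (\<integral>\<omega>. X \<omega> ^ 4 \<partial>M) / x^4"
    by (rule integral_Markov_inequality_measure[OF intM, of "space M"]) (use x in auto)
  moreover have "measure M {\<omega>\<in>space M. x < \<bar>X \<omega>\<bar>} \<le> measure M {\<omega>\<in>space M. x^4 \<le> X \<omega> ^ 4}"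
  proof (rule finite_measure_mono)
    show "{\<omega>\<in>space M. x^4 \<le> X \<omega> ^ 4} \<in> sets M" by measurable
    show "{\<omega>\<in>space M. x < \<bar>X \<omega>\<bar>} \<subseteq> {\<omega>\<in>space M. x^4 \<le> X \<omega> ^ 4}"
    proof safe
      fix \<omega> assume "x < \<bar>X \<omega>\<bar>"
      then have "x^4 \<le> \<bar>X \<omega>\<bar>^4" using x by (intro power_mono) auto
      then show "x^4 \<le> X \<omega> ^ 4" by (simp add: power_even_abs_numeral)
    qed
  qed
  ultimately show ?thesis using E by simp
qed

lemma normal_lower_pos:
  fixes X :: "'a \<Rightarrow> real"
  assumes P: "prob_space M" and D: "distributed M lborel X (\<lambda>x. ennreal (normal_density 0 1 x))"
    and c: "c < 0"
  shows "0 < measure M {\<omega>\<in>space M. X \<omega> \<le> c}"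
proof -
  interpret prob_space M by (rule P)
  have Xm[measurable]: "X \<in> borel_measurable M" using distributed_measurable[OF D] by simp
  define m where "m = exp (-((c-1)^2) / 2) / sqrt (2 * pi)"
  have m0: "0 < m" by (simp add: m_def)
  have eq: "{\<omega>\<in>space M. X \<omega> \<le> c} = X -` {..c} \<inter> space M" by auto
  have "emeasure M {\<omega>\<in>space M. X \<omega> \<le> c} = (\<integral>\<^sup>+y. ennreal (normal_density 0 1 y) * indicator {..c} y \<partial>lborel)"
    unfolding eq by (rule distributed_emeasure[OF D]) simp
  also have "\<dots> \<ge> (\<integral>\<^sup>+y. ennreal m * indicator {c-1..c} y \<partial>lborel)"
  proof (rule nn_integral_mono)
    fix y :: real
    show "ennreal m * indicator {c-1..c} y \<le> ennreal (normal_density 0 1 y) * indicator {..c} y"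
    proof (cases "y \<in> {c-1..c}")
      case True
      then have "y^2 \<le> (c-1)^2" using c by (subst abs_le_square_iff[symmetric]) auto
      then have "exp (-((c-1)^2) / 2) \<le> exp (-(y^2)/2)" by simp
      then have "m \<le> normal_density 0 1 y" unfolding m_def normal_density_def
        by (simp add: divide_right_mono)
      then show ?thesis using True by (simp add: indicator_def)
    qed (simp add: indicator_def)
  qed
  finally have "ennreal m * emeasure lborel {c-1..c} \<le> emeasure M {\<omega>\<in>space M. X \<omega> \<le> c}"
    by (simp add: nn_integral_cmult_indicator)
  then have "ennreal m \<le> emeasure M {\<omega>\<in>space M. X \<omega> \<le> c}" by simp
  then show ?thesis using m0 by (simp add: emeasure_eq_measure)
qed


lemma t1: "(sqrt (1/2^j::real))^4 = 1/4^j"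
proof -
  have "(sqrt (1/2^j::real))^4 = ((sqrt (1/2^j))^2)^2" by (subst power_mult[symmetric]) simp
  also have "\<dots> = (1/2^j)^2" by simp
  also have "\<dots> = 1/4^j" by (simp add: power_divide flip: power_mult power_mult_distrib) (simp add: power_mult mult.commute[of j])
  finally show ?thesis .
qed
lemma t2: "(K*(9/10)^j)^4 = K^4 * (6561/10000::real)^j"
proof -
  have "((9/10::real)^j)^4 = ((9/10)^4)^j" by (simp flip: power_mult add: mult.commute)
  also have "(9/10::real)^4 = 6561/10000" by (simp add: eval_nat_numeral)
  finally show ?thesis by (simp add: power_mult_distrib)
qed
lemma t3: "(2::real)^j * (1/4^j) / (6561/10000)^j = (5000/6561)^j"
proof -
  have "(5000/6561::real)^j = (2 * (1/4) / (6561/10000))^j" by simp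
  also have "\<dots> = 2^j * (1/4)^j / (6561/10000)^j" by (simp only: power_mult_distrib power_divide)
  finally show ?thesis by (simp add: power_one_over)
qed

context
  fixes M :: "'a measure" and W :: "real \<Rightarrow> 'a \<Rightarrow> real"
  assumes BM: "brownian_motion M W"
begin

lemma bm_prob: "prob_space M" using BM unfolding brownian_motion_def by simp

lemma bm_meas[measurable]: "t \<ge> 0 \<Longrightarrow> W t \<in> borel_measurable M"
  using BM unfolding brownian_motion_def by simp

lemma bm_dist: "0 \<le> s \<Longrightarrow> s < t \<Longrightarrow> distributed M lborel (\<lambda>\<omega>. W t \<omega> - W s \<omega>)
          (\<lambda>x. ennreal (normal_density 0 (sqrt (t - s)) x))"
  using BM unfolding brownian_motion_def by simp

lemma bm_indep: "prob_space.indep_vars M (\<lambda>_. borel) (\<lambda>i \<omega>. W (real (Suc i)) \<omega> - W (real i) \<omega>) {..<n}"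
proof -
  have "\<forall>(n::nat) (ts::nat \<Rightarrow> real). 0 \<le> ts 0 \<and> (\<forall>i<n. ts i < ts (Suc i)) \<longrightarrow>
        prob_space.indep_vars M (\<lambda>_. borel) (\<lambda>i \<omega>. W (ts (Suc i)) \<omega> - W (ts i) \<omega>) {..<n}"
    using BM unfolding brownian_motion_def by blast
  from spec[OF spec[OF this, of n], of real] show ?thesis by simp
qed

definition Ebad :: "real \<Rightarrow> nat \<Rightarrow> 'a set" where
  "Ebad K N = (\<Union>j. \<Union>k\<in>{..<N*2^j}. {\<omega>\<in>space M. K*(9/10)^j < \<bar>W (real (Suc k)/2^j) \<omega> - W (real k/2^j) \<omega>\<bar>})"

lemma Ebad_sets: "Ebad K N \<in> sets M"
  unfolding Ebad_def by measurable

lemma Ebad_measure: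
  assumes K: "K > 0"
  shows "measure M (Ebad K N) \<le> 13 * real N / K^4"
proof -
  interpret prob_space M by (rule bm_prob)
  define A where "A j k = {\<omega>\<in>space M. K*(9/10)^j < \<bar>W (real (Suc k)/2^j) \<omega> - W (real k/2^j) \<omega>\<bar>}" for j k
  define b where "b j = 3 * real N / K^4 * (5000/6561::real)^j" for j :: nat
  have Asets: "A j k \<in> sets M" for j k unfolding A_def by measurable
  have Ak: "measure M (A j k) \<le> 3 * (1/4^j) / (K^4 * (6561/10000)^j)" for j k
  proof -
    have lt: "real k / 2^j < real (Suc k) / 2^j" by (simp add: divide_strict_right_mono)
    have d: "real (Suc k) / 2^j - real k / 2^j = 1/2^j" by (simp add: field_simps)
    have "measure M (A j k) \<le> 3 * (sqrt (1/2^j))^4 / (K*(9/10)^j)^4"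
      unfolding A_def using normal_tail4[OF bm_prob bm_dist[OF _ lt, unfolded d]] K by simp
    also have "(sqrt (1/2^j::real))^4 = 1/4^j" by (rule t1)
    also have "(K*(9/10)^j)^4 = K^4 * (6561/10000::real)^j" by (rule t2)
    finally show ?thesis .
  qed
  have Aj: "measure M (\<Union>k\<in>{..<N*2^j}. A j k) \<le> b j" for j
  proof -
    have "measure M (\<Union>k\<in>{..<N*2^j}. A j k) \<le> (\<Sum>k\<in>{..<N*2^j}. measure M (A j k))"
      by (rule finite_measure_subadditive_finite) (auto simp: Asets)
    also have "\<dots> \<le> (\<Sum>k\<in>{..<N*2^j}. 3 * (1/4^j) / (K^4 * (6561/10000)^j))"
      by (intro sum_mono Ak)
    also have "\<dots> = real N * 2^j * (3 * (1/4^j) / (K^4 * (6561/10000)^j))" by simp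
    also have "\<dots> = b j"
    proof -
      have "(2::real)^j * (1/4^j) / (6561/10000)^j = (5000/6561)^j"
        by (rule t3)
      then show ?thesis unfolding b_def by (simp add: field_simps)
    qed
    finally show ?thesis .
  qed
  have sb: "summable b" unfolding b_def by (intro summable_mult summable_geometric) simp
  have sm: "summable (\<lambda>j. measure M (\<Union>k\<in>{..<N*2^j}. A j k))"
    by (rule summable_comparison_test'[OF sb]) (use Aj in auto)
  have "measure M (Ebad K N) = measure M (\<Union>j. \<Union>k\<in>{..<N*2^j}. A j k)"
    unfolding Ebad_def A_def ..
  also have "\<dots> \<le> (\<Sum>j. measure M (\<Union>k\<in>{..<N*2^j}. A j k))"
    by (rule finite_measure_subadditive_countably) (auto simp: Asets sm)
  also have "\<dots> \<le> (\<Sum>j. b j)" by (intro suminf_le Aj sm sb)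
  also have "(\<Sum>j. b j) = 3 * real N / K^4 * (6561/1561)"
    unfolding b_def by (subst suminf_mult) (auto simp: suminf_geometric)
  also have "\<dots> \<le> 13 * real N / K^4"
  proof -
    have k: "0 < K^4" using K by simp
    have "3 * real N / K^4 * (6561/1561) = (19683/1561) * (real N / K^4)" by simp
    also have "\<dots> \<le> 13 * (real N / K^4)" using k by (intro mult_right_mono) auto
    finally show ?thesis by simp
  qed
  finally show ?thesis .
qed

lemma incr_dist: "distributed M lborel (\<lambda>\<omega>. W (real (Suc k)) \<omega> - W (real k) \<omega>)
          (\<lambda>x. ennreal (normal_density 0 1 x))"
  using bm_dist[of "real k" "real (Suc k)"] by simp

lemma incr_le_emeasure: "emeasure M {\<omega>\<in>space M. W (real (Suc k)) \<omega> - W (real k) \<omega> \<le> c}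
   = (\<integral>\<^sup>+y. ennreal (normal_density 0 1 y) * indicator {..c} y \<partial>lborel)"
proof -
  have eq: "{\<omega>\<in>space M. W (real (Suc k)) \<omega> - W (real k) \<omega> \<le> c} = (\<lambda>\<omega>. W (real (Suc k)) \<omega> - W (real k) \<omega>) -` {..c} \<inter> space M" by auto
  show ?thesis unfolding eq by (rule distributed_emeasure[OF incr_dist]) simp
qed

definition Hgood :: "real \<Rightarrow> nat \<Rightarrow> 'a set" where
  "Hgood c N = {\<omega>\<in>space M. \<forall>k<N. c < W (real (Suc k)) \<omega> - W (real k) \<omega>}"

lemma Hgood_sets: "Hgood c N \<in> sets M"
  unfolding Hgood_def by measurable

lemma Hgood_measure:
  assumes c: "c < 0"
  shows "\<exists>r. 0 \<le> r \<and> r < 1 \<and> (\<forall>N>0. measure M (Hgood c N) = r^N)"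
proof -
  interpret prob_space M by (rule bm_prob)
  define A where "A k = {\<omega>\<in>space M. c < W (real (Suc k)) \<omega> - W (real k) \<omega>}" for k
  define p where "p = measure M {\<omega>\<in>space M. W (real (Suc 0)) \<omega> - W (real 0) \<omega> \<le> c}"
  have p0: "0 < p" unfolding p_def by (rule normal_lower_pos[OF bm_prob incr_dist c])
  have p1: "p \<le> 1" unfolding p_def by simp
  have pk: "measure M {\<omega>\<in>space M. W (real (Suc k)) \<omega> - W (real k) \<omega> \<le> c} = p" for k
    unfolding p_def measure_def incr_le_emeasure ..
  have Ak: "prob (A k) = 1 - p" for k
  proof -
    have "A k = space M - {\<omega>\<in>space M. W (real (Suc k)) \<omega> - W (real k) \<omega> \<le> c}"
      unfolding A_def by auto
    then have "prob (A k) = 1 - prob {\<omega>\<in>space M. W (real (Suc k)) \<omega> - W (real k) \<omega> \<le> c}"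
      by (simp add: prob_compl)
    then show ?thesis using pk by simp
  qed
  have ind: "indep_events A {..<N}" for N
    unfolding A_def
    by (rule indep_eventsI_indep_vars[OF bm_indep, where P="\<lambda>_ y. c < y"]) simp
  show ?thesis
  proof (intro exI conjI allI impI)
    show "0 \<le> 1 - p" using p1 by simp
    show "1 - p < 1" using p0 by simp
    fix N :: nat assume N: "0 < N"
    have "Hgood c N = (\<Inter>k\<in>{..<N}. A k)"
      unfolding Hgood_def A_def using N by auto
    then have "prob (Hgood c N) = (\<Prod>k\<in>{..<N}. prob (A k))"
      using ind[of N] N unfolding indep_events_def by auto
    also have "\<dots> = (1-p)^N" using Ak by simp
    finally show "prob (Hgood c N) = (1-p)^N" .
  qed
qed

end


lemma closed_right_bound:
  fixes q :: "real \<Rightarrow> real"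
  assumes "continuous_on {s..t} q" "s < t" "\<forall>u\<in>{s<..t}. c \<le> q u"
  shows "\<forall>u\<in>{s..t}. c \<le> q u"
proof -
  have cl: "closed ({s..t} \<inter> q -` {c..})"
    by (rule continuous_closed_preimage[OF assms(1)]) auto
  have "{s<..t} \<subseteq> {s..t} \<inter> q -` {c..}" using assms(3) by auto
  then have "closure {s<..t} \<subseteq> {s..t} \<inter> q -` {c..}" by (rule closure_minimal[OF _ cl])
  then show ?thesis using assms(2) by auto
qed

lemma exists_dyadic_scale:
  fixes h :: real
  assumes "0 < h" "h \<le> 1"
  shows "\<exists>n. h \<le> 1/2^n \<and> 1/2^(Suc n) < h"
proof -
  obtain m where m: "(1/2::real)^m < h" using real_arch_pow_inv[OF assms(1), of "1/2"] by auto
  define m0 where "m0 = (LEAST m. (1/2::real)^m < h)"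
  have m0: "(1/2::real)^m0 < h" unfolding m0_def by (rule LeastI[of _ m]) (rule m)
  have "m0 \<noteq> 0"
  proof
    assume "m0 = 0" then show False using m0 assms by simp
  qed
  then obtain n where n: "m0 = Suc n" by (cases m0) auto
  have "\<not> (1/2::real)^n < h" using not_less_Least[of n "\<lambda>m. (1/2::real)^m < h"] n unfolding m0_def by simp
  then show ?thesis using m0 n by (intro exI[of _ n]) (simp add: power_one_over)
qed

lemma hit_time_less:
  assumes "hit_time f x < hit_time f y"
  shows "\<exists>t\<ge>0. f t = x \<and> (\<forall>u\<ge>0. f u = y \<longrightarrow> t < u)"
proof -
  from assms obtain e where e: "e \<in> {ereal t | t. 0 \<le> t \<and> f t = x}" "e < hit_time f y"
    unfolding hit_time_def[of f x] by (auto simp: Inf_less_iff)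
  then obtain t where t: "e = ereal t" "0 \<le> t" "f t = x" by auto
  have "t < u" if "u \<ge> 0" "f u = y" for u
  proof -
    have "hit_time f y \<le> ereal u" unfolding hit_time_def using that by (intro Inf_lower) auto
    then have "ereal t < ereal u" using e t by (metis order_less_le_trans)
    then show ?thesis by simp
  qed
  then show ?thesis using t by blast
qed

lemma path_lemma:
  fixes w q :: "real \<Rightarrow> real" and a \<beta> \<gamma> C Kb l :: real and N :: nat
  assumes a: "a > 0" and b: "\<beta> > 0" and g: "\<gamma> < 0"
    and l: "0 < l" "l \<le> 1"
    and Kb_def: "Kb = (exp (l/(2*\<beta>)) - a)/4"
    and w0: "w 0 = 0"
    and contq: "continuous_on {0..} q"
    and sde: "\<And>t. t \<ge> 0 \<Longrightarrow> q t = w t + integral {0..t} (\<lambda>s. (a - exp (q s / \<beta>))/4)"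
    and chain: "\<And>n s t. 0 \<le> s \<Longrightarrow> s \<le> t \<Longrightarrow> t \<le> real N \<Longrightarrow> t - s \<le> 1/2^n \<Longrightarrow> \<bar>w t - w s\<bar> \<le> C*(9/10)^n"
    and C: "C > 0"
    and K1: "Kb > C" and K2: "Kb * l^7 \<ge> 2*C*(2*C)^7"
    and hit: "hit_time q l < hit_time q \<gamma>"
  shows "\<forall>k<N. \<gamma> - 1 - a/4 < w (real (Suc k)) - w (real k)"
proof -
  define g where "g s = (a - exp (q s / \<beta>))/4" for s
  have gc: "continuous_on {0..} g" unfolding g_def by (intro continuous_intros contq) (use b in auto)
  have gint: "g integrable_on {u..v}" if "0 \<le> u" for u v
    by (rule integrable_continuous_interval, rule continuous_on_subset[OF gc]) (use that in auto)
  have sde': "q t = w t + integral {0..t} g" if "t \<ge> 0" for t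
    using sde[OF that] unfolding g_def .
  have diff: "q v - q u = w v - w u + integral {u..v} g" if "0 \<le> u" "u \<le> v" for u v
  proof -
    have "integral {0..u} g + integral {u..v} g = integral {0..v} g"
      by (rule Henstock_Kurzweil_Integration.integral_combine) (use that gint[of 0 v] in auto)
    then show ?thesis using sde'[of u] sde'[of v] that by simp
  qed
  have q0: "q 0 = 0" using sde'[of 0] w0 by simp
  have Kpos: "Kb > 0" using K1 C by simp
  have claimA: "\<forall>t\<in>{0..real N}. q t < l"
  proof (rule ccontr)
    assume "\<not> (\<forall>t\<in>{0..real N}. q t < l)"
    then obtain t' where t': "t' \<in> {0..real N}" "l \<le> q t'" by force
    define S where "S = {0..real N} \<inter> q -` {l..}"
    have Sne: "S \<noteq> {}" using t' unfolding S_def by auto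
    have Scl: "closed S" unfolding S_def
      by (rule continuous_closed_preimage[OF continuous_on_subset[OF contq]]) auto
    have Sbd: "bdd_below S" unfolding S_def by (rule bdd_belowI[of _ 0]) auto
    define t1 where "t1 = Inf S"
    have t1S: "t1 \<in> S" unfolding t1_def by (rule closed_contains_Inf[OF Sne Sbd Scl])
    then have t1: "0 \<le> t1" "t1 \<le> real N" "l \<le> q t1" unfolding S_def by auto
    have below: "q u < l" if "0 \<le> u" "u < t1" for u
    proof (rule ccontr)
      assume "\<not> q u < l"
      then have "u \<in> S" unfolding S_def using that t1 by auto
      then have "t1 \<le> u" unfolding t1_def by (rule cInf_lower[OF _ Sbd])
      then show False using that by simp
    qed
    define S' where "S' = {0..t1} \<inter> q -` {..l/2}"
    have S'ne: "0 \<in> S'" unfolding S'_def using q0 l t1 by auto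
    have S'cl: "closed S'" unfolding S'_def
      by (rule continuous_closed_preimage[OF continuous_on_subset[OF contq]]) auto
    have S'bd: "bdd_above S'" unfolding S'_def by (rule bdd_aboveI[of _ t1]) auto
    define s where "s = Sup S'"
    have sS: "s \<in> S'" unfolding s_def by (rule closed_contains_Sup[OF _ S'bd S'cl]) (use S'ne in auto)
    then have s: "0 \<le> s" "s \<le> t1" "q s \<le> l/2" unfolding S'_def by auto
    have above: "l/2 < q u" if "s < u" "u \<le> t1" for u
    proof (rule ccontr)
      assume "\<not> l/2 < q u"
      then have "u \<in> S'" unfolding S'_def using that s by auto
      then have "u \<le> s" unfolding s_def by (rule cSup_upper[OF _ S'bd])
      then show False using that by simp
    qed
    have st: "s < t1" using s t1 l by (cases "s = t1") auto
    have ge: "\<forall>u\<in>{s..t1}. l/2 \<le> q u"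
      by (rule closed_right_bound[OF continuous_on_subset[OF contq] st]) (use s above in \<open>auto intro: less_imp_le\<close>)
    have gle: "g u \<le> - Kb" if "u \<in> {s..t1}" for u
    proof -
      have "l/(2*\<beta>) \<le> q u / \<beta>" using ge that b by (simp add: divide_right_mono field_simps)
      then have "exp (l/(2*\<beta>)) \<le> exp (q u / \<beta>)" by simp
      then show ?thesis unfolding g_def Kb_def by (simp add: field_simps)
    qed
    have key: "q t1 - q u + Kb * (t1 - u) \<le> w t1 - w u" if "u \<in> {s..t1}" for u
    proof -
      have "integral {u..t1} g \<le> integral {u..t1} (\<lambda>_. - Kb)"
        by (rule integral_le[OF gint]) (use that s gle in auto)
      also have "\<dots> = - Kb * (t1 - u)" using that by simp
      finally show ?thesis using diff[of u t1] that s by simp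
    qed
    show False
    proof (cases "t1 - s \<le> 1")
      case True
      define h where "h = t1 - s"
      have h: "0 < h" "h \<le> 1" using st True unfolding h_def by auto
      obtain n where n: "h \<le> 1/2^n" "1/2^(Suc n) < h" using exists_dyadic_scale[OF h] by blast
      have ch: "\<bar>w t1 - w s\<bar> \<le> C*(9/10)^n" by (rule chain) (use s t1 n h_def in auto)
      have ks: "l/2 + Kb * h \<le> w t1 - w s" using key[of s] s t1 st unfolding h_def by auto
      have th1: "(9/10::real)^n \<le> 1" by (simp add: power_le_one)
      have kh: "0 < Kb * h" using Kpos h by simp
      have ab: "w t1 - w s \<le> \<bar>w t1 - w s\<bar>" by (rule abs_ge_self)
      have A1: "l/2 \<le> C*(9/10)^n" using ch ks kh ab by linarith
      have ct: "C*(9/10)^n \<le> C" using th1 C by (simp add: mult_left_le)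
      have A2: "Kb * h \<le> C" using ch ks l ct ab by linarith
      have A3: "l/(2*C) \<le> (9/10)^n" using A1 C by (simp add: field_simps)
      have "(l/(2*C))^7 \<le> ((9/10)^n)^7" using A3 l C by (intro power_mono) auto
      also have "\<dots> = ((9/10::real)^7)^n" by (simp flip: power_mult add: mult.commute)
      also have "\<dots> \<le> (1/2)^n" by (intro power_mono) (auto simp: eval_nat_numeral)
      finally have A4: "(l/(2*C))^7 \<le> (1/2)^n" .
      have "Kb * (l/(2*C))^7 \<le> Kb * (1/2)^n" using A4 Kpos by (intro mult_left_mono) auto
      also have "\<dots> = 2 * (Kb * (1/2^(Suc n)))" by (simp add: power_one_over)
      also have "\<dots> < 2 * (Kb * h)" using mult_strict_left_mono[OF n(2) Kpos] by simp
      also have "\<dots> \<le> 2 * C" using A2 by simp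
      finally have A5: "Kb * (l/(2*C))^7 < 2*C" .
      have "Kb * (l/(2*C))^7 = Kb * l^7 / (2*C)^7" by (simp add: power_divide)
      also have "\<dots> \<ge> 2*C*(2*C)^7 / (2*C)^7" using K2 C by (intro divide_right_mono) auto
      finally show False using A5 C by simp
    next
      case False
      define u where "u = t1 - 1"
      have u: "u \<in> {s..t1}" "0 \<le> u" "u < t1" using False s unfolding u_def by auto
      have "q u < l" using below u by simp
      then have k1: "Kb \<le> w t1 - w u" using key[OF u(1)] t1 unfolding u_def by simp
      have "\<bar>w t1 - w u\<bar> \<le> C*(9/10)^0" by (rule chain) (use u t1 u_def in auto)
      then show False using k1 K1 by simp
    qed
  qed
  obtain t0 where t0: "0 \<le> t0" "q t0 = l" "\<forall>u\<ge>0. q u = \<gamma> \<longrightarrow> t0 < u"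
    using hit_time_less[OF hit] by blast
  have t0N: "real N < t0" using claimA t0 by force
  have claimB: "\<gamma> < q u" if uN: "u \<in> {0..real N}" for u
  proof (rule ccontr)
    assume "\<not> \<gamma> < q u"
    moreover have "continuous_on {0..u} q" using continuous_on_subset[OF contq, of "{0..u}"] by auto
    ultimately obtain x where x: "0 \<le> x" "x \<le> u" "q x = \<gamma>"
      using IVT2'[of q u \<gamma> 0] q0 g uN by force
    then show False using t0 t0N uN by force
  qed
  show ?thesis
  proof (intro allI impI)
    fix k assume k: "k < N"
    have "integral {real k..real (Suc k)} g \<le> integral {real k..real (Suc k)} (\<lambda>_. a/4)"
      by (rule integral_le[OF gint]) (auto simp: g_def)
    also have "\<dots> = a/4" by simp
    finally have I: "integral {real k..real (Suc k)} g \<le> a/4" .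
    have "q (real (Suc k)) - q (real k) = w (real (Suc k)) - w (real k) + integral {real k..real (Suc k)} g"
      by (rule diff) auto
    moreover have "\<gamma> < q (real (Suc k))" using claimB k by auto
    moreover have "q (real k) < l" using claimA k by auto
    ultimately show "\<gamma> - 1 - a/4 < w (real (Suc k)) - w (real k)" using I l by linarith
  qed
qed


lemma asym:
  fixes a D :: real
  shows "eventually (\<lambda>\<beta>. D \<le> (exp (\<beta> powr (1/6) / (2*\<beta>)) - a)/4 * (\<beta> powr (1/6))^7) (at_right 0)"
proof -
  define G where "G x = (exp (1 / (2*x^5)) - a)/4 * x^7" for x :: real
  have G: "filterlim G at_top (at_right 0)" unfolding G_def by real_asymp
  have p: "filterlim (\<lambda>\<beta>::real. \<beta> powr (1/6)) (at_right 0) (at_right 0)" by real_asymp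
  have "filterlim (\<lambda>\<beta>. G (\<beta> powr (1/6))) at_top (at_right 0)"
    by (rule filterlim_compose[OF G p])
  then have ev: "eventually (\<lambda>\<beta>. D \<le> G (\<beta> powr (1/6))) (at_right 0)"
    by (simp add: filterlim_at_top)
  have pos: "eventually (\<lambda>\<beta>::real. 0 < \<beta>) (at_right 0)" by (simp add: eventually_at_right_less)
  show ?thesis
  proof (rule eventually_mono[OF eventually_conj[OF ev pos]])
    fix \<beta> :: real assume h: "D \<le> G (\<beta> powr (1/6)) \<and> 0 < \<beta>"
    have six: "(\<beta> powr (1/6))^6 = \<beta>" 
    proof -
      have "(\<beta> powr (1/6))^6 = (\<beta> powr (1/6)) powr (real 6)"
        by (rule powr_realpow[symmetric]) (use h in simp)
      also have "\<dots> = \<beta>" using h by (simp add: powr_powr)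
      finally show ?thesis .
    qed
    have "\<beta> powr (1/6) / (2*\<beta>) = 1 / (2 * (\<beta> powr (1/6))^5)"
    proof -
      have "\<beta> powr (1/6) / (2*\<beta>) = \<beta> powr (1/6) / (2*(\<beta> powr (1/6))^6)" using six by simp
      also have "\<dots> = 1 / (2 * (\<beta> powr (1/6))^5)" using h by (simp add: eval_nat_numeral field_simps)
      finally show ?thesis .
    qed
    then show "D \<le> (exp (\<beta> powr (1/6) / (2*\<beta>)) - a)/4 * (\<beta> powr (1/6))^7"
      using h unfolding G_def by simp
  qed
qed

theorem lemma4p2:
  fixes a \<gamma> :: real and M :: "'a measure" and W :: "real \<Rightarrow> 'a \<Rightarrow> real"
    and q :: "real \<Rightarrow> real \<Rightarrow> 'a \<Rightarrow> real"
  assumes "a > 0" and "\<gamma> < 0"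
    and BM: "brownian_motion M W"
    and q_meas: "\<And>\<beta> t. \<beta> > 0 \<Longrightarrow> t \<ge> 0 \<Longrightarrow> q \<beta> t \<in> borel_measurable M"
    and q_cont: "\<And>\<beta> \<omega>. \<beta> > 0 \<Longrightarrow> \<omega> \<in> space M \<Longrightarrow> continuous_on {0..} (\<lambda>t. q \<beta> t \<omega>)"
    and q_sde: "\<And>\<beta> \<omega> t. \<beta> > 0 \<Longrightarrow> \<omega> \<in> space M \<Longrightarrow> t \<ge> 0 \<Longrightarrow>
       q \<beta> t \<omega> = W t \<omega> + integral {0..t} (\<lambda>s. (a - exp (q \<beta> s \<omega> / \<beta>)) / 4)"
  shows "((\<lambda>\<beta>. measure M {\<omega> \<in> space M.
             hit_time (\<lambda>t. q \<beta> t \<omega>) (\<beta> powr (1/6)) < hit_time (\<lambda>t. q \<beta> t \<omega>) \<gamma>})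
          \<longlongrightarrow> 0) (at_right 0)"
proof -
  note a = \<open>a > 0\<close> and g = \<open>\<gamma> < 0\<close>
  interpret prob_space M by (rule bm_prob[OF BM])
  define A where "A \<beta> = {\<omega> \<in> space M.
             hit_time (\<lambda>t. q \<beta> t \<omega>) (\<beta> powr (1/6)) < hit_time (\<lambda>t. q \<beta> t \<omega>) \<gamma>}" for \<beta>
  define c where "c = \<gamma> - 1 - a/4"
  have c: "c < 0" using a g unfolding c_def by simp
  obtain r where r: "0 \<le> r" "r < 1" "\<And>N. N > 0 \<Longrightarrow> measure M (Hgood M W c N) = r^N"
    using Hgood_measure[OF BM c] by blast
  show ?thesis unfolding A_def[symmetric]
  proof (rule tendstoI)
    fix \<epsilon> :: real assume e: "\<epsilon> > 0"
    obtain n where n: "r^n < \<epsilon>/2" using real_arch_pow_inv[of "\<epsilon>/2" r] e r by auto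
    define N where "N = Suc n"
    have N0: "N > 0" unfolding N_def by simp
    have rN: "r^N < \<epsilon>/2"
    proof -
      have "r^N \<le> r^n" unfolding N_def using r by (simp add: mult_left_le_one_le)
      then show ?thesis using n by simp
    qed
    define K0 where "K0 = 26 * real N / \<epsilon> + 1"
    have K0: "K0 \<ge> 1" unfolding K0_def using e by simp
    have K0e: "13 * real N / K0^4 < \<epsilon>/2"
    proof -
      have "K0 \<le> K0^4" using power_increasing[of 1 4 K0] K0 by simp
      moreover have "26 * real N / \<epsilon> < K0" unfolding K0_def by simp
      moreover have "26 * real N / \<epsilon> * \<epsilon> = 26 * real N" using e by simp
      ultimately have "26 * real N < \<epsilon> * K0" using e
        by (metis mult.commute mult_strict_right_mono)
      also have "\<epsilon> * K0 \<le> \<epsilon> * K0^4" using \<open>K0 \<le> K0^4\<close> e by simp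
      finally have "26 * real N < \<epsilon> * K0^4" .
      then show ?thesis using K0 by (simp add: field_simps)
    qed
    define C where "C = 19 * K0"
    have C: "C > 0" unfolding C_def using K0 by simp
    define D0 where "D0 = 2*C*(2*C)^7 + C + 1"
    have ev1: "eventually (\<lambda>\<beta>. D0 \<le> (exp (\<beta> powr (1/6) / (2*\<beta>)) - a)/4 * (\<beta> powr (1/6))^7) (at_right 0)"
      by (rule asym)
    have ev2: "eventually (\<lambda>\<beta>::real. 0 < \<beta> \<and> \<beta> < 1) (at_right 0)"
      by (simp add: eventually_at_right_less eventually_at_right_field) (auto intro!: exI[of _ 1])
    show "eventually (\<lambda>\<beta>. dist (measure M (A \<beta>)) 0 < \<epsilon>) (at_right 0)"
    proof (rule eventually_mono[OF eventually_conj[OF ev1 ev2]])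
      fix \<beta> :: real
      assume h: "D0 \<le> (exp (\<beta> powr (1/6) / (2*\<beta>)) - a)/4 * (\<beta> powr (1/6))^7 \<and> 0 < \<beta> \<and> \<beta> < 1"
      define l where "l = \<beta> powr (1/6)"
      define Kb where "Kb = (exp (l/(2*\<beta>)) - a)/4"
      have b: "0 < \<beta>" "\<beta> < 1" using h by auto
      have l: "0 < l" "l \<le> 1" unfolding l_def using b powr_mono2[of "1/6" \<beta> 1] by auto
      have KD: "D0 \<le> Kb * l^7" using h unfolding Kb_def l_def by simp
      have P7: "0 \<le> 2*C*(2*C)^7" using C by simp
      have D0p: "0 < D0" unfolding D0_def using C P7 by linarith
      have l7: "l^7 \<le> 1" "0 < l^7" using l by (auto intro: power_le_one)
      have "0 < Kb * l^7" using KD D0p by linarith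
      then have Kbpos: "0 < Kb" using l7 by (simp add: zero_less_mult_iff)
      have "Kb * l^7 \<le> Kb" using Kbpos l7 by (simp add: mult_left_le)
      then have K1: "Kb > C" and K2: "Kb * l^7 \<ge> 2*C*(2*C)^7" using KD P7 C unfolding D0_def by linarith+
      have sub: "A \<beta> \<subseteq> Ebad M W K0 N \<union> Hgood M W c N"
      proof
        fix \<omega> assume \<omega>: "\<omega> \<in> A \<beta>"
        show "\<omega> \<in> Ebad M W K0 N \<union> Hgood M W c N"
        proof (cases "\<omega> \<in> Ebad M W K0 N")
          case False
          have sp: "\<omega> \<in> space M" using \<omega> unfolding A_def by auto
          have hit: "hit_time (\<lambda>t. q \<beta> t \<omega>) l < hit_time (\<lambda>t. q \<beta> t \<omega>) \<gamma>"
            using \<omega> unfolding A_def l_def by auto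
          have Wc: "continuous_on {0..} (\<lambda>t. W t \<omega>)" and W0: "W 0 \<omega> = 0"
            using BM sp unfolding brownian_motion_def by auto
          have inc: "\<bar>W (real (Suc k) / 2^j) \<omega> - W (real k / 2^j) \<omega>\<bar> \<le> K0 * (9/10)^j"
            if "k < N * 2^j" for j k
          proof (rule ccontr)
            assume "\<not> ?thesis"
            then have "\<omega> \<in> Ebad M W K0 N" unfolding Ebad_def[OF BM] using sp that by (auto simp: not_le)
            with False show False by simp
          qed
          have chain: "\<bar>W t \<omega> - W s \<omega>\<bar> \<le> C*(9/10)^n'"
            if "0 \<le> s" "s \<le> t" "t \<le> real N" "t - s \<le> 1/2^n'" for n' s t
            using chain_bound[where f="\<lambda>t. W t \<omega>" and N=N and M=K0, OF Wc inc _ that] K0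
            unfolding C_def by simp
          have "\<forall>k<N. \<gamma> - 1 - a/4 < W (real (Suc k)) \<omega> - W (real k) \<omega>"
            by (rule path_lemma[where q="\<lambda>t. q \<beta> t \<omega>" and w="\<lambda>t. W t \<omega>" and \<beta>=\<beta> and a=a and l=l and Kb=Kb and C=C,
                 OF a b(1) g l(1) l(2) Kb_def W0 q_cont[OF b(1) sp] q_sde[OF b(1) sp] chain C K1 K2 hit])
          then show ?thesis using sp unfolding Hgood_def[OF BM] c_def by auto
        qed simp
      qed
      have "measure M (A \<beta>) \<le> measure M (Ebad M W K0 N \<union> Hgood M W c N)"
        by (rule finite_measure_mono[OF sub]) (use Ebad_sets[OF BM] Hgood_sets[OF BM] in auto)
      also have "\<dots> \<le> measure M (Ebad M W K0 N) + measure M (Hgood M W c N)"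
        by (rule measure_Un_le) (use Ebad_sets[OF BM] Hgood_sets[OF BM] in auto)
      also have "\<dots> < \<epsilon>/2 + \<epsilon>/2"
        using Ebad_measure[OF BM, of K0 N] K0 K0e r(3)[OF N0] rN by simp
      finally show "dist (measure M (A \<beta>)) 0 < \<epsilon>" by simp
    qed
  qed
qed

end
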